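(* Let $3\le n\le k$ be integers. For $j=1,\dots,n-2$ define $$\Gamma_j=\sum_{\mathbf{r}\in E_j}\sum_{l=1}^{j}\mathds{1}_{\{r_l=1\}}\frac{(|\mathbf{r}|-1)!}{r_1!\cdots r_{n-1}!}\Big(\frac1k\Big)^{|\mathbf{r}|}(r_{n-1}-1)$$ and $T_j=(j+1)\binom{k-n+j+1}{k-n}\Gamma_j+1$. Then for $j=1,\dots,n-2$, $$T_j=-(k-n)+(k-n+1)\sum_{i=2}^{j+1}\frac{1}{k-n+i}.$$
   Context: $\mathbb{N}=\{0,1,2,\dots\}$, $|\mathbf{r}|=r_1+\dots+r_{n-1}$. For $j=1,\dots,n-1$, $E_j$ is the set of $\mathbf{r}\in\mathbb{N}^{n-1}$ with $r_i\ge1$ for $1\le i\le j$, $r_l\ge0$ for $j<l\le n-1$, and at least one of $r_1,\dots,r_j$ equal to $1$. *)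

theory Defs
  imports "HOL-Analysis.Analysis"
begin

text \<open>Vectors r in N^(n-1) are represented as functions nat => nat with r i = 0 outside {1..n-1}.\<close>

definition E_set :: "nat \<Rightarrow> nat \<Rightarrow> (nat \<Rightarrow> nat) set" where
  "E_set n j = {r. (\<forall>i. i \<notin> {1..n-1} \<longrightarrow> r i = 0)
                  \<and> (\<forall>i\<in>{1..j}. 1 \<le> r i)
                  \<and> (\<exists>i\<in>{1..j}. r i = 1)}"

definition absr :: "nat \<Rightarrow> (nat \<Rightarrow> nat) \<Rightarrow> nat" where
  "absr n r = (\<Sum>i=1..n-1. r i)"

definition Gamma_term :: "nat \<Rightarrow> nat \<Rightarrow> nat \<Rightarrow> (nat \<Rightarrow> nat) \<Rightarrow> real" where
  "Gamma_term n k j r =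
     (\<Sum>l=1..j. if r l = 1 then 1 else 0)
     * (fact (absr n r - 1) / (\<Prod>i=1..n-1. fact (r i)))
     * (1 / real k) ^ (absr n r)
     * (real (r (n-1)) - 1)"

definition Gamma :: "nat \<Rightarrow> nat \<Rightarrow> nat \<Rightarrow> real" where
  "Gamma n k j = infsum (Gamma_term n k j) (E_set n j)"

definition T_val :: "nat \<Rightarrow> nat \<Rightarrow> nat \<Rightarrow> real" where
  "T_val n k j = real (j+1) * real ((k-n+j+1) choose (k-n)) * Gamma n k j + 1"

end

theory Submission
  imports Defs "HOL-Computational_Algebra.Formal_Power_Series"
begin

no_notation vec_nth (infixl "$" 90)
notation fps_nth (infixl "$" 75)


definition Dsum :: "nat \<Rightarrow> (nat \<Rightarrow> real) \<Rightarrow> real" where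
  "Dsum j g = (\<Sum>s\<le>j. real (j choose s) * (-1)^s * g s)"

lemma Dsum_Suc: "Dsum (Suc j) g = Dsum j g - Dsum j (\<lambda>s. g (Suc s))"
proof -
  have "Dsum (Suc j) g = g 0 + (\<Sum>s\<le>j. real (Suc j choose Suc s) * (-1)^Suc s * g (Suc s))"
    unfolding Dsum_def by (subst sum.atMost_Suc_shift) simp
  also have "\<dots> = g 0 + (\<Sum>s\<le>j. real (j choose Suc s) * (-1)^Suc s * g (Suc s))
       - Dsum j (\<lambda>s. g (Suc s))"
    unfolding Dsum_def by (simp add: sum_subtractf[symmetric] algebra_simps sum.distrib[symmetric])
  also have "g 0 + (\<Sum>s\<le>j. real (j choose Suc s) * (-1)^Suc s * g (Suc s)) = 
      (\<Sum>s\<le>Suc j. real (j choose s) * (-1)^s * g s)"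
    by (subst sum.atMost_Suc_shift) simp
  also have "\<dots> = Dsum j g" unfolding Dsum_def by simp
  finally show ?thesis .
qed

lemma Dsum_S1: "Dsum j (\<lambda>s. 1 / (real d + 1 + real s)) = fact j * fact d / fact (d + 1 + j)"
proof (induction j arbitrary: d)
  case 0
  have "fact (d + 1) = (real d + 1) * (fact d :: real)" by simp
  moreover have "(fact d :: real) > 0" by simp
  ultimately show ?case by (simp add: Dsum_def del: fact_Suc)
next
  case (Suc j)
  have e: "(\<lambda>s. 1 / (real d + 1 + real (Suc s))) = (\<lambda>s. 1 / (real (Suc d) + 1 + real s))"
    by (auto simp: field_simps)
  have f1: "fact (Suc d + 1 + j) = (real d + 2 + j) * (fact (d + 1 + j) :: real)"
    by (simp add: algebra_simps)
  have f2: "fact (d + 1 + Suc j) = (real d + 2 + j) * (fact (d + 1 + j) :: real)"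
    by (simp add: algebra_simps)
  have f3: "fact (Suc d) = (real d + 1) * (fact d :: real)" by simp
  have f4: "fact (Suc j) = (real j + 1) * (fact j :: real)" by simp
  have pos: "(fact (d + 1 + j) :: real) > 0" by simp
  define F where "F = (fact (d+1+j)::real)"
  have Fp: "F > 0" unfolding F_def by simp
  have "Dsum (Suc j) (\<lambda>s. 1 / (real d + 1 + real s)) =
     fact j * fact d / F - fact j * ((real d + 1) * fact d) / ((real d + 2 + j) * F)"
    unfolding Dsum_Suc Suc e f1 f3 F_def by simp
  also have "\<dots> = ((real j + 1) * fact j) * fact d / ((real d + 2 + j) * F)"
    using Fp by (simp add: divide_simps add_pos_pos) (simp add: algebra_simps)
  also have "\<dots> = fact (Suc j) * fact d / fact (d + 1 + Suc j)"
    unfolding f2 f4 F_def by simp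
  finally show ?case .
qed

definition Hs :: "nat \<Rightarrow> nat \<Rightarrow> real" where
  "Hs d j = (\<Sum>i\<le>j. 1 / (real d + 1 + real i))"

lemma Dsum_S2: "Dsum j (\<lambda>s. 1 / (real d + 1 + real s)^2) = fact j * fact d / fact (d + 1 + j) * Hs d j"
proof (induction j arbitrary: d)
  case 0
  have "fact (d + 1) = (real d + 1) * (fact d :: real)" by simp
  moreover have "(fact d :: real) > 0" by simp
  ultimately show ?case by (simp add: Dsum_def Hs_def power2_eq_square del: fact_Suc)
next
  case (Suc j)
  have e: "(\<lambda>s. 1 / (real d + 1 + real (Suc s))^2) = (\<lambda>s. 1 / (real (Suc d) + 1 + real s)^2)"
    by (auto simp: field_simps)
  have h1: "Hs d (Suc j) = 1 / (real d + 1) + Hs (Suc d) j"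
    unfolding Hs_def by (subst sum.atMost_Suc_shift) (simp add: algebra_simps)
  have h2: "Hs d (Suc j) = Hs d j + 1 / (real d + 2 + j)"
    unfolding Hs_def by (simp add: algebra_simps)
  have h3: "Hs (Suc d) j = Hs d j - 1 / (real d + 1) + 1 / (real d + 2 + j)"
    using h1 h2 by simp
  have f1: "fact (Suc d + 1 + j) = (real d + 2 + j) * (fact (d + 1 + j) :: real)"
    by (simp add: algebra_simps)
  have f2: "fact (d + 1 + Suc j) = (real d + 2 + j) * (fact (d + 1 + j) :: real)"
    by (simp add: algebra_simps)
  have f3: "fact (Suc d) = (real d + 1) * (fact d :: real)" by simp
  have f4: "fact (Suc j) = (real j + 1) * (fact j :: real)" by simp
  have pos: "(fact (d + 1 + j) :: real) > 0" by simp
  define F where "F = (fact (d+1+j)::real)"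
  have Fp: "F > 0" unfolding F_def by simp
  have "Dsum (Suc j) (\<lambda>s. 1 / (real d + 1 + real s)^2) =
     fact j * fact d / F * Hs d j - fact j * ((real d + 1) * fact d) / ((real d + 2 + j) * F)
       * (Hs d j - 1 / (real d + 1) + 1 / (real d + 2 + j))"
    unfolding Dsum_Suc Suc e f1 f3 F_def h3 by simp
  also have "\<dots> = ((real j + 1) * fact j) * fact d / ((real d + 2 + j) * F) * (Hs d j + 1 / (real d + 2 + j))"
    using Fp by (simp add: divide_simps add_pos_pos) (simp add: algebra_simps)
  also have "\<dots> = fact (Suc j) * fact d / fact (d + 1 + Suc j) * Hs d (Suc j)"
    unfolding f2 f4 F_def h2 by simp
  finally show ?case .
qed




definition Lv :: "nat set \<Rightarrow> nat \<Rightarrow> (nat \<Rightarrow> nat) set" where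
  "Lv I m = {r. (\<forall>i. i \<notin> I \<longrightarrow> r i = 0) \<and> sum r I = m}"

lemma finite_Lv: assumes "finite I" shows "finite (Lv I m)"
proof -
  have "Lv I m \<subseteq> {r. \<forall>x. (x \<in> I \<longrightarrow> r x \<in> {0..m}) \<and> (x \<notin> I \<longrightarrow> r x = 0)}"
    unfolding Lv_def using assms by (auto intro: member_le_sum[where f = "\<lambda>x. x", simplified] simp: member_le_sum)
  moreover have "finite {r. \<forall>x. (x \<in> I \<longrightarrow> r x \<in> {0..m}) \<and> (x \<notin> I \<longrightarrow> r x = (0::nat))}"
    by (rule finite_set_of_finite_funs) (use assms in auto)
  ultimately show ?thesis by (rule finite_subset)
qed

lemma conv:
  fixes f :: "nat \<Rightarrow> real fps"
  assumes "finite I"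
  shows "(\<Sum>r\<in>Lv I m. \<Prod>i\<in>I. f i $ r i) = (\<Prod>i\<in>I. f i) $ m"
  using assms
proof (induction I arbitrary: m rule: finite_induct)
  case empty
  have "Lv {} m = (if m = 0 then {\<lambda>_. 0} else {})" unfolding Lv_def by auto
  then show ?case by simp
next
  case (insert a I)
  have "(\<Sum>r\<in>Lv (insert a I) m. \<Prod>i\<in>insert a I. f i $ r i) =
        (\<Sum>p\<in>Sigma {0..m} (\<lambda>t. Lv I (m - t)). \<Prod>i\<in>insert a I. f i $ ((snd p)(a := fst p)) i)"
  proof (rule sum.reindex_bij_witness[of _ "\<lambda>p. (snd p)(a := fst p)" "\<lambda>r. (r a, r(a:=0))"])
    fix r assume r: "r \<in> Lv (insert a I) m"
    show "(snd (r a, r(a := 0)))(a := fst (r a, r(a := 0))) = r" by auto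
    have s: "sum (r(a := 0)) I = sum r I"
      using insert.hyps by (intro sum.cong) auto
    show "(r a, r(a := 0)) \<in> Sigma {0..m} (\<lambda>t. Lv I (m - t))"
      using r insert.hyps s unfolding Lv_def by auto
  next
    fix p assume p: "p \<in> Sigma {0..m} (\<lambda>t. Lv I (m - t))"
    then show "(((snd p)(a := fst p)) a, ((snd p)(a := fst p))(a := 0)) = p"
      using insert.hyps unfolding Lv_def by (cases p) auto
    have s: "sum ((snd p)(a := fst p)) I = sum (snd p) I"
      using insert.hyps by (intro sum.cong) auto
    show "(snd p)(a := fst p) \<in> Lv (insert a I) m"
      using p insert.hyps s unfolding Lv_def by (cases p) auto
  qed simp
  also have "\<dots> = (\<Sum>t=0..m. \<Sum>r\<in>Lv I (m - t). f a $ t * (\<Prod>i\<in>I. f i $ r i))"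
  proof -
    have "(\<Sum>t=0..m. \<Sum>r\<in>Lv I (m - t). f a $ t * (\<Prod>i\<in>I. f i $ r i)) =
          (\<Sum>(t,r)\<in>Sigma {0..m} (\<lambda>t. Lv I (m - t)). f a $ t * (\<Prod>i\<in>I. f i $ r i))"
      by (rule sum.Sigma) (auto intro: finite_Lv insert.hyps)
    also have "\<dots> = (\<Sum>p\<in>Sigma {0..m} (\<lambda>t. Lv I (m - t)). \<Prod>i\<in>insert a I. f i $ ((snd p)(a := fst p)) i)"
    proof (rule sum.cong[OF refl])
      fix p :: "nat \<times> (nat \<Rightarrow> nat)"
      obtain t r where pe: "p = (t, r)" by (cases p)
      have "(\<Prod>i\<in>I. f i $ (r(a := t)) i) = (\<Prod>i\<in>I. f i $ r i)"
        using insert.hyps by (intro prod.cong) auto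
      then show "(case p of (t, r) \<Rightarrow> f a $ t * (\<Prod>i\<in>I. f i $ r i)) = (\<Prod>i\<in>insert a I. f i $ ((snd p)(a := fst p)) i)"
        using insert.hyps by (simp add: pe)
    qed
    finally show ?thesis by simp
  qed
  also have "\<dots> = (\<Sum>t=0..m. f a $ t * (\<Prod>i\<in>I. f i) $ (m - t))"
    by (simp add: sum_distrib_left[symmetric] insert.IH)
  also have "\<dots> = (\<Prod>i\<in>insert a I. f i) $ m"
    using insert.hyps by (simp add: fps_mult_nth)
  finally show ?case .
qed



lemma has_sum_Union_nonneg:
  fixes f :: "'a \<Rightarrow> real" and B :: "nat \<Rightarrow> 'a set"
  assumes fB: "\<And>m. (f has_sum g m) (B m)" and g: "(g has_sum S) UNIV"
    and nn: "\<And>x. x \<in> (\<Union>m. B m) \<Longrightarrow> f x \<ge> 0" and dj: "disjoint_family B"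
  shows "(f has_sum S) (\<Union>m. B m)"
proof -
  have s: "f summable_on (\<Union>m\<in>UNIV. B m)"
    apply (rule summable_on_UnionI[where g = g])
    using fB apply blast
    using g apply (simp add: has_sum_imp_summable)
    using nn apply blast
    using dj apply (simp add: disjoint_family_on_def)
    done
  have inj: "inj_on snd (Sigma UNIV B)"
  proof (rule inj_onI)
    fix x y assume "x \<in> Sigma UNIV B" "y \<in> Sigma UNIV B" "snd x = snd y"
    then show "x = y" using dj unfolding disjoint_family_on_def
      by (cases x; cases y) auto
  qed
  have im: "snd ` Sigma UNIV B = (\<Union>m. B m)" by force
  have h: "(f has_sum infsum f (\<Union>m. B m)) (\<Union>m. B m)"
    using s by (simp add: has_sum_infsum)
  hence "((f \<circ> snd) has_sum infsum f (\<Union>m. B m)) (Sigma UNIV B)"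
    using has_sum_reindex[OF inj, of f "infsum f (\<Union>m. B m)"] unfolding im by blast
  hence "(g has_sum infsum f (\<Union>m. B m)) UNIV"
    by (rule has_sum_SigmaD) (simp add: fB)
  hence "S = infsum f (\<Union>m. B m)" using g has_sum_unique by blast
  thus ?thesis using h by simp
qed




lemma sumsP:
  fixes x c :: real
  assumes "0 \<le> x * c" "x * c < 1"
  shows "(\<lambda>m. if m < 2 then 0 else real (m - 1) * x ^ m * c ^ (m - 2)) sums (x^2 / (1 - x * c)^2)"
    (is "?p sums ?v")
proof -
  have "(\<lambda>m. of_nat (Suc m) * (x * c) ^ m) sums (1 / (1 - x * c)^2)"
    by (rule geometric_deriv_sums) (use assms in simp)
  hence "(\<lambda>m. x^2 * (of_nat (Suc m) * (x * c) ^ m)) sums (x^2 * (1 / (1 - x * c)^2))"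
    by (rule sums_mult)
  moreover have "(\<lambda>m. ?p (Suc (Suc m))) = (\<lambda>m. x^2 * (of_nat (Suc m) * (x * c) ^ m))"
    by (rule ext) (simp add: power_mult_distrib power2_eq_square)
  ultimately have "(\<lambda>m. ?p (Suc (Suc m))) sums ?v" by simp
  hence "(\<lambda>m. ?p (Suc m)) sums (?v + ?p (Suc 0))" by (rule sums_Suc)
  hence "?p sums (?v + ?p (Suc 0) + ?p 0)" by (rule sums_Suc)
  thus ?thesis by simp
qed

lemma sumsQ:
  fixes x c :: real
  assumes "0 \<le> x * c" "x * c < 1"
  shows "(\<lambda>m. if m < 1 then 0 else x ^ m * c ^ (m - 1)) sums (x / (1 - x * c))"
    (is "?p sums ?v")
proof -
  have "(\<lambda>m. (x * c) ^ m) sums (1 / (1 - x * c))"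
    by (rule geometric_sums) (use assms in simp)
  hence "(\<lambda>m. x * (x * c) ^ m) sums (x * (1 / (1 - x * c)))"
    by (rule sums_mult)
  moreover have "(\<lambda>m. ?p (Suc m)) = (\<lambda>m. x * (x * c) ^ m)"
    by (rule ext) (simp add: power_mult_distrib)
  ultimately have "(\<lambda>m. ?p (Suc m)) sums ?v" by simp
  hence "?p sums (?v + ?p 0)" by (rule sums_Suc)
  thus ?thesis by simp
qed

definition Fam :: "nat \<Rightarrow> nat \<Rightarrow> nat \<Rightarrow> real fps \<Rightarrow> nat \<Rightarrow> real fps" where
  "Fam N j l z i = (if i = l then fps_X else if i \<le> j then fps_exp 1 - 1 else if i < N then fps_exp 1 else z)"

lemma prod_Fam:
  assumes "1 \<le> l" "l \<le> j" "j < N"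
  shows "(\<Prod>i\<in>{1..N}. Fam N j l z i) = fps_X * (fps_exp 1 - 1)^(j-1) * fps_exp 1 ^ (N-1-j) * z"
proof -
  have s1: "{1..N} = insert N ({1..j} \<union> {Suc j..N-1})" using assms by auto
  have s2: "{1..j} = insert l ({1..j} - {l})" using assms by auto
  have a: "(\<Prod>i\<in>{1..j} - {l}. Fam N j l z i) = (fps_exp 1 - 1)^(j-1)"
  proof -
    have "(\<Prod>i\<in>{1..j} - {l}. Fam N j l z i) = (\<Prod>i\<in>{1..j} - {l}. fps_exp 1 - 1)"
      by (rule prod.cong) (auto simp: Fam_def)
    also have "\<dots> = (fps_exp 1 - 1)^(j-1)" using assms by simp
    finally show ?thesis .
  qed
  have b: "(\<Prod>i\<in>{Suc j..N-1}. Fam N j l z i) = fps_exp 1 ^ (N-1-j)"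
  proof -
    have "(\<Prod>i\<in>{Suc j..N-1}. Fam N j l z i) = (\<Prod>i\<in>{Suc j..N-1}. fps_exp 1)"
      by (rule prod.cong) (use assms in \<open>auto simp: Fam_def\<close>)
    also have "\<dots> = fps_exp 1 ^ (N-1-j)" by simp
    finally show ?thesis .
  qed
  have "(\<Prod>i\<in>{1..N}. Fam N j l z i) = Fam N j l z N * ((\<Prod>i\<in>{1..j}. Fam N j l z i) * (\<Prod>i\<in>{Suc j..N-1}. Fam N j l z i))"
    unfolding s1 using assms by (subst prod.insert) (auto simp: prod.union_disjoint)
  also have "(\<Prod>i\<in>{1..j}. Fam N j l z i) = Fam N j l z l * (\<Prod>i\<in>{1..j} - {l}. Fam N j l z i)"
    by (rule prod.remove) (use assms in auto)
  finally show ?thesis using assms unfolding a b by (simp add: Fam_def mult_ac)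
qed

lemma Hexp:
  assumes "1 \<le> j" "j < N"
  shows "(fps_exp 1 - 1)^(j-1) * fps_exp (1::real) ^ (N-j) =
    (\<Sum>s\<le>j-1. fps_const (real (j-1 choose s) * (-1)^s) * fps_exp (real (N-1-s)))"
proof -
  have "(fps_exp 1 - 1)^(j-1) = (- 1 + fps_exp (1::real))^(j-1)" by simp
  also have "\<dots> = (\<Sum>s\<le>j-1. of_nat (j-1 choose s) * (-1)^s * fps_exp 1 ^ (j-1-s))"
    by (rule binomial_ring)
  finally have eq1: "(fps_exp 1 - 1)^(j-1) = (\<Sum>s\<le>j-1. of_nat (j-1 choose s) * (-1)^s * fps_exp (1::real) ^ (j-1-s))" .
  have "(fps_exp 1 - 1)^(j-1) * fps_exp (1::real) ^ (N-j) =
     (\<Sum>s\<le>j-1. of_nat (j-1 choose s) * (-1)^s * (fps_exp 1 ^ (j-1-s) * fps_exp 1 ^ (N-j)))"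
    unfolding eq1 sum_distrib_right by (simp only: mult.assoc)
  also have "\<dots> = (\<Sum>s\<le>j-1. fps_const (real (j-1 choose s) * (-1)^s) * fps_exp (real (N-1-s)))"
  proof (rule sum.cong[OF refl])
    fix s assume "s \<in> {..j-1}"
    hence "j - 1 - s + (N - j) = N - 1 - s" using assms by auto
    hence e: "real (j - 1 - s) + real (N - j) = real (N-1-s)" by (metis of_nat_add)
    have "fps_exp 1 ^ (j-1-s) * fps_exp (1::real) ^ (N-j) = fps_exp (real (j - 1 - s) + real (N - j))"
      by (simp add: fps_exp_power_mult fps_exp_add_mult)
    hence "fps_exp 1 ^ (j-1-s) * fps_exp (1::real) ^ (N-j) = fps_exp (real (N-1-s))"
      by (simp only: e)
    moreover have "(of_nat (j-1 choose s) * (-1)^s :: real fps) = fps_const (real (j-1 choose s) * (-1)^s)"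
    proof -
      have m1: "(-1::real fps)^s = fps_const ((-1)^s)"
        by (metis fps_const_1_eq_1 fps_const_neg fps_const_power)
      have "(of_nat (j-1 choose s) * (-1)^s :: real fps) = fps_const (real (j-1 choose s)) * fps_const ((-1)^s)"
        by (simp only: m1 fps_of_nat)
      thus ?thesis by (simp only: fps_const_mult)
    qed
    ultimately show "of_nat (j-1 choose s) * (-1)^s * (fps_exp 1 ^ (j-1-s) * fps_exp (1::real) ^ (N-j)) =
       fps_const (real (j-1 choose s) * (-1)^s) * fps_exp (real (N-1-s))"
      by (simp add: mult.assoc)
  qed
  finally show ?thesis .
qed

lemma Hnth:
  "(\<Sum>s\<le>j-1. fps_const (real (j-1 choose s) * (-1)^s) * fps_exp (real (N-1-s))) $ t =
   (\<Sum>s\<le>j-1. real (j-1 choose s) * (-1)^s * real (N-1-s) ^ t / fact t)"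
  by (simp add: fps_sum_nth)




lemma has_sum_diff':
  fixes f g :: "'a \<Rightarrow> real"
  assumes "(f has_sum a) A" "(g has_sum b) A"
  shows "((\<lambda>x. f x - g x) has_sum (a - b)) A"
proof -
  have "((\<lambda>x. - g x) has_sum (- b)) A" using assms(2) by (simp add: has_sum_uminus)
  from has_sum_add[OF assms(1) this] show ?thesis by simp
qed

lemma has_sum_sum_fin:
  fixes f :: "'b \<Rightarrow> 'a \<Rightarrow> real"
  assumes "finite L" "\<And>l. l \<in> L \<Longrightarrow> (f l has_sum a l) A"
  shows "((\<lambda>x. \<Sum>l\<in>L. f l x) has_sum (\<Sum>l\<in>L. a l)) A"
  using assms
proof (induction L rule: finite_induct)
  case empty
  then show ?case by simp
next
  case (insert l L)
  have "((\<lambda>x. f l x + (\<Sum>l\<in>L. f l x)) has_sum (a l + (\<Sum>l\<in>L. a l))) A"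
    by (rule has_sum_add) (use insert in auto)
  then show ?case using insert.hyps by simp
qed

lemma Fam_nonneg:
  assumes "\<And>t. z $ t \<ge> 0"
  shows "Fam N j l z i $ t \<ge> 0"
  using assms by (auto simp: Fam_def)

lemma XE_nth: "(fps_X * fps_exp (1::real)) $ t = (if t = 0 then 0 else 1 / fact (t - 1))"
  by simp

context
  fixes n k j :: nat
  assumes n3: "3 \<le> n" and nk: "n \<le> k" and j1: "1 \<le> j" and jn: "j \<le> n - 2"
begin

definition tm :: "nat \<Rightarrow> real fps \<Rightarrow> (nat \<Rightarrow> nat) \<Rightarrow> real" where
  "tm l z r = fact (absr n r - 1) * (1 / real k) ^ (absr n r) * (\<Prod>i\<in>{1..n-1}. Fam (n-1) j l z i $ r i)"

definition HH :: "real fps" where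
  "HH = (fps_exp 1 - 1)^(j-1) * fps_exp 1 ^ (n-1-j)"

definition cc :: "nat \<Rightarrow> real" where "cc s = real (n - 1 - 1 - s)"
definition aa :: "nat \<Rightarrow> real" where "aa s = real (j-1 choose s) * (-1)^s"

lemma HH_nth: "HH $ t = (\<Sum>s\<le>j-1. aa s * cc s ^ t / fact t)"
proof -
  have "HH = (\<Sum>s\<le>j-1. fps_const (real (j-1 choose s) * (-1)^s) * fps_exp (real (n-1-1-s)))"
    unfolding HH_def by (rule Hexp) (use j1 jn n3 in auto)
  then show ?thesis unfolding aa_def cc_def by (simp add: fps_sum_nth)
qed

lemma prodP: "l \<in> {1..j} \<Longrightarrow> (\<Prod>i\<in>{1..n-1}. Fam (n-1) j l (fps_X * fps_exp 1) i) = fps_X^2 * HH"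
proof -
  assume l: "l \<in> {1..j}"
  have "(\<Prod>i\<in>{1..n-1}. Fam (n-1) j l (fps_X * fps_exp 1) i) =
     fps_X * (fps_exp 1 - 1)^(j-1) * fps_exp 1 ^ (n-1-1-j) * (fps_X * fps_exp 1)"
    by (rule prod_Fam) (use l jn n3 in auto)
  also have "\<dots> = fps_X^2 * ((fps_exp 1 - 1)^(j-1) * (fps_exp 1 ^ (n-1-1-j) * fps_exp 1))"
    by (simp add: power2_eq_square mult_ac)
  also have "fps_exp 1 ^ (n-1-1-j) * fps_exp (1::real) = fps_exp 1 ^ (n-1-j)"
  proof -
    have "n-1-j = Suc (n-1-1-j)" using jn n3 by auto
    then show ?thesis by (simp add: power_Suc2)
  qed
  finally show ?thesis unfolding HH_def .
qed

lemma prodQ: "l \<in> {1..j} \<Longrightarrow> (\<Prod>i\<in>{1..n-1}. Fam (n-1) j l (fps_exp 1) i) = fps_X * HH"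
proof -
  assume l: "l \<in> {1..j}"
  have "(\<Prod>i\<in>{1..n-1}. Fam (n-1) j l (fps_exp 1) i) =
     fps_X * (fps_exp 1 - 1)^(j-1) * fps_exp 1 ^ (n-1-1-j) * fps_exp 1"
    by (rule prod_Fam) (use l jn n3 in auto)
  also have "\<dots> = fps_X * ((fps_exp 1 - 1)^(j-1) * (fps_exp 1 ^ (n-1-1-j) * fps_exp 1))"
    by (simp add: mult_ac)
  also have "fps_exp 1 ^ (n-1-1-j) * fps_exp (1::real) = fps_exp 1 ^ (n-1-j)"
  proof -
    have "n-1-j = Suc (n-1-1-j)" using jn n3 by auto
    then show ?thesis by (simp add: power_Suc2)
  qed
  finally show ?thesis unfolding HH_def .
qed

lemma level_gen:
  "(\<Sum>r\<in>Lv {1..n-1} m. tm l z r) = fact (m - 1) * (1 / real k) ^ m * (\<Prod>i\<in>{1..n-1}. Fam (n-1) j l z i) $ m"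
proof -
  have "(\<Sum>r\<in>Lv {1..n-1} m. tm l z r) = (\<Sum>r\<in>Lv {1..n-1} m. fact (m - 1) * (1 / real k) ^ m * (\<Prod>i\<in>{1..n-1}. Fam (n-1) j l z i $ r i))"
    by (rule sum.cong) (auto simp: tm_def Lv_def absr_def)
  also have "\<dots> = fact (m - 1) * (1 / real k) ^ m * (\<Prod>i\<in>{1..n-1}. Fam (n-1) j l z i) $ m"
    by (simp add: sum_distrib_left[symmetric] conv)
  finally show ?thesis .
qed

definition pP :: "nat \<Rightarrow> nat \<Rightarrow> real" where
  "pP s m = (if m < 2 then 0 else real (m - 1) * (1 / real k) ^ m * cc s ^ (m - 2))"
definition pQ :: "nat \<Rightarrow> nat \<Rightarrow> real" where
  "pQ s m = (if m < 1 then 0 else (1 / real k) ^ m * cc s ^ (m - 1))"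

lemma levelP: "l \<in> {1..j} \<Longrightarrow> (\<Sum>r\<in>Lv {1..n-1} m. tm l (fps_X * fps_exp 1) r) = (\<Sum>s\<le>j-1. aa s * pP s m)"
proof -
  assume l: "l \<in> {1..j}"
  have "(\<Sum>r\<in>Lv {1..n-1} m. tm l (fps_X * fps_exp 1) r) = fact (m - 1) * (1 / real k) ^ m * (fps_X^2 * HH) $ m"
    by (simp only: level_gen prodP[OF l])
  also have "\<dots> = (\<Sum>s\<le>j-1. aa s * pP s m)"
  proof (cases "m < 2")
    case True
    then show ?thesis by (simp add: fps_X_power_mult_nth pP_def)
  next
    case False
    then obtain t where m: "m = Suc (Suc t)" by (metis add_2_eq_Suc le_Suc_ex not_less)
    have "fact (m - 1) * (1 / real k) ^ m * (fps_X^2 * HH) $ m = fact (Suc t) * (1 / real k) ^ m * HH $ t"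
      by (simp add: fps_X_power_mult_nth m)
    also have "\<dots> = (\<Sum>s\<le>j-1. fact (Suc t) * (1 / real k) ^ m * (aa s * cc s ^ t / fact t))"
      by (simp add: HH_nth sum_distrib_left)
    also have "\<dots> = (\<Sum>s\<le>j-1. aa s * pP s m)"
    proof (rule sum.cong[OF refl])
      fix s
      have "fact (Suc t) = real (Suc t) * (fact t :: real)" by simp
      moreover have "(fact t :: real) > 0" by simp
      ultimately show "fact (Suc t) * (1 / real k) ^ m * (aa s * cc s ^ t / fact t) = aa s * pP s m"
        by (simp add: pP_def m del: fact_Suc)
    qed
    finally show ?thesis .
  qed
  finally show ?thesis .
qed

lemma levelQ: "l \<in> {1..j} \<Longrightarrow> (\<Sum>r\<in>Lv {1..n-1} m. tm l (fps_exp 1) r) = (\<Sum>s\<le>j-1. aa s * pQ s m)"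
proof -
  assume l: "l \<in> {1..j}"
  have "(\<Sum>r\<in>Lv {1..n-1} m. tm l (fps_exp 1) r) = fact (m - 1) * (1 / real k) ^ m * (fps_X * HH) $ m"
    by (simp only: level_gen prodQ[OF l])
  also have "\<dots> = (\<Sum>s\<le>j-1. aa s * pQ s m)"
  proof (cases "m < 1")
    case True
    then show ?thesis by (simp add: pQ_def)
  next
    case False
    then obtain t where m: "m = Suc t" by (metis not0_implies_Suc not_less_zero less_one)
    have "fact (m - 1) * (1 / real k) ^ m * (fps_X * HH) $ m = fact t * (1 / real k) ^ m * HH $ t"
      by (simp add: m)
    also have "\<dots> = (\<Sum>s\<le>j-1. fact t * (1 / real k) ^ m * (aa s * cc s ^ t / fact t))"
      by (simp add: HH_nth sum_distrib_left)
    also have "\<dots> = (\<Sum>s\<le>j-1. aa s * pQ s m)"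
    proof (rule sum.cong[OF refl])
      fix s
      have "(fact t :: real) > 0" by simp
      then show "fact t * (1 / real k) ^ m * (aa s * cc s ^ t / fact t) = aa s * pQ s m"
        by (simp add: pQ_def m)
    qed
    finally show ?thesis .
  qed
  finally show ?thesis .
qed

lemma cc_bound: "s \<le> j - 1 \<Longrightarrow> 0 \<le> (1 / real k) * cc s \<and> (1 / real k) * cc s < 1"
proof -
  assume "s \<le> j - 1"
  have "cc s < real k" unfolding cc_def using n3 nk by auto
  moreover have "real k > 0" using n3 nk by auto
  ultimately show ?thesis unfolding cc_def by (auto simp: field_simps)
qed

lemma kcc: "s \<le> j - 1 \<Longrightarrow> real k - cc s = real (k - n + 1) + 1 + real s"
proof -
  assume s: "s \<le> j - 1"
  have "n - 1 - 1 - s + (k - n + 1) + 1 + s = k" using s jn n3 nk by auto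
  hence "real (n - 1 - 1 - s) + real (k - n + 1) + 1 + real s = real k"
    by (metis of_nat_add of_nat_1)
  thus ?thesis unfolding cc_def by linarith
qed

lemma valP: "s \<le> j - 1 \<Longrightarrow> (1 / real k)^2 / (1 - (1 / real k) * cc s)^2 = 1 / (real (k - n + 1) + 1 + real s)^2"
proof -
  assume s: "s \<le> j - 1"
  have kp: "real k > 0" using n3 nk by auto
  have "(1 / real k)^2 / (1 - (1 / real k) * cc s)^2 = 1 / (real k - cc s)^2"
    using kp by (simp add: field_simps power2_eq_square)
  thus ?thesis using kcc[OF s] by simp
qed

lemma valQ: "s \<le> j - 1 \<Longrightarrow> (1 / real k) / (1 - (1 / real k) * cc s) = 1 / (real (k - n + 1) + 1 + real s)"
proof -
  assume s: "s \<le> j - 1"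
  have kp: "real k > 0" using n3 nk by auto
  have "(1 / real k) / (1 - (1 / real k) * cc s) = 1 / (real k - cc s)"
    using kp by (simp add: field_simps)
  thus ?thesis using kcc[OF s] by simp
qed

definition Uset :: "(nat \<Rightarrow> nat) set" where "Uset = {r. \<forall>i. i \<notin> {1..n-1} \<longrightarrow> r i = 0}"

lemma Uset_Union: "Uset = (\<Union>m. Lv {1..n-1} m)"
  unfolding Uset_def Lv_def by auto

lemma Lv_disj: "disjoint_family (Lv I)"
  unfolding disjoint_family_on_def Lv_def by auto

lemma tm_nonneg: "(\<And>t. z $ t \<ge> 0) \<Longrightarrow> tm l z r \<ge> 0"
  unfolding tm_def by (intro mult_nonneg_nonneg prod_nonneg Fam_nonneg) auto

lemma hasP: "l \<in> {1..j} \<Longrightarrow> (tm l (fps_X * fps_exp 1) has_sum Dsum (j-1) (\<lambda>s. 1 / (real (k - n + 1) + 1 + real s)^2)) Uset"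
proof -
  assume l: "l \<in> {1..j}"
  let ?z = "fps_X * fps_exp (1::real)"
  have zn: "\<And>t. ?z $ t \<ge> 0" by simp
  let ?g = "\<lambda>m. \<Sum>r\<in>Lv {1..n-1} m. tm l ?z r"
  have "(\<lambda>m. \<Sum>s\<le>j-1. aa s * pP s m) sums (\<Sum>s\<le>j-1. aa s * ((1 / real k)^2 / (1 - (1 / real k) * cc s)^2))"
  proof (rule sums_sum, rule sums_mult)
    fix s assume "s \<in> {..j-1}"
    then show "pP s sums ((1 / real k)^2 / (1 - (1 / real k) * cc s)^2)"
      unfolding pP_def using cc_bound[of s] by (intro sumsP) auto
  qed
  also have "(\<Sum>s\<le>j-1. aa s * ((1 / real k)^2 / (1 - (1 / real k) * cc s)^2)) = Dsum (j-1) (\<lambda>s. 1 / (real (k - n + 1) + 1 + real s)^2)"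
    (is "(\<Sum>s\<le>j-1. aa s * ?v s) = Dsum _ ?w")
    unfolding Dsum_def
  proof (rule sum.cong[OF refl])
    fix s assume "s \<in> {..j-1}"
    hence s: "s \<le> j - 1" by simp
    show "aa s * ?v s = real (j - 1 choose s) * (- 1) ^ s * ?w s"
      by (simp only: aa_def valP[OF s])
  qed
  finally have "?g sums Dsum (j-1) (\<lambda>s. 1 / (real (k - n + 1) + 1 + real s)^2)"
    using levelP[OF l] by simp
  hence gs: "(?g has_sum Dsum (j-1) (\<lambda>s. 1 / (real (k - n + 1) + 1 + real s)^2)) UNIV"
    by (rule sums_nonneg_imp_has_sum) (intro sum_nonneg tm_nonneg zn)
  show ?thesis unfolding Uset_Union
    by (rule has_sum_Union_nonneg[OF _ gs]) (auto intro: has_sum_finite finite_Lv tm_nonneg zn Lv_disj)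
qed

lemma hasQ: "l \<in> {1..j} \<Longrightarrow> (tm l (fps_exp 1) has_sum Dsum (j-1) (\<lambda>s. 1 / (real (k - n + 1) + 1 + real s))) Uset"
proof -
  assume l: "l \<in> {1..j}"
  let ?z = "fps_exp (1::real)"
  have zn: "\<And>t. ?z $ t \<ge> 0" by simp
  let ?g = "\<lambda>m. \<Sum>r\<in>Lv {1..n-1} m. tm l ?z r"
  have "(\<lambda>m. \<Sum>s\<le>j-1. aa s * pQ s m) sums (\<Sum>s\<le>j-1. aa s * ((1 / real k) / (1 - (1 / real k) * cc s)))"
  proof (rule sums_sum, rule sums_mult)
    fix s assume "s \<in> {..j-1}"
    then show "pQ s sums ((1 / real k) / (1 - (1 / real k) * cc s))"
      unfolding pQ_def using cc_bound[of s] by (intro sumsQ) auto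
  qed
  also have "(\<Sum>s\<le>j-1. aa s * ((1 / real k) / (1 - (1 / real k) * cc s))) = Dsum (j-1) (\<lambda>s. 1 / (real (k - n + 1) + 1 + real s))"
    (is "(\<Sum>s\<le>j-1. aa s * ?v s) = Dsum _ ?w")
    unfolding Dsum_def
  proof (rule sum.cong[OF refl])
    fix s assume "s \<in> {..j-1}"
    hence s: "s \<le> j - 1" by simp
    show "aa s * ?v s = real (j - 1 choose s) * (- 1) ^ s * ?w s"
      by (simp only: aa_def valQ[OF s])
  qed
  finally have "?g sums Dsum (j-1) (\<lambda>s. 1 / (real (k - n + 1) + 1 + real s))"
    using levelQ[OF l] by simp
  hence gs: "(?g has_sum Dsum (j-1) (\<lambda>s. 1 / (real (k - n + 1) + 1 + real s))) UNIV"
    by (rule sums_nonneg_imp_has_sum) (intro sum_nonneg tm_nonneg zn)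
  show ?thesis unfolding Uset_Union
    by (rule has_sum_Union_nonneg[OF _ gs]) (auto intro: has_sum_finite finite_Lv tm_nonneg zn Lv_disj)
qed

lemma prod_split: "(\<Prod>i\<in>{1..n-1}. F i) = (\<Prod>i\<in>{1..n-2}. F i) * (F (n-1) :: real)"
proof -
  have "{1..n-1} = insert (n-1) {1..n-2}" using n3 by auto
  moreover have "n - 1 \<notin> {1..n-2}" using n3 by auto
  ultimately show ?thesis by (simp add: mult.commute)
qed

lemma Fam_low: "i \<in> {1..n-2} \<Longrightarrow> Fam (n-1) j l z i = Fam (n-1) j l 0 i"
  unfolding Fam_def by auto

lemma Fam_top: "l \<in> {1..j} \<Longrightarrow> Fam (n-1) j l z (n-1) = z"
  unfolding Fam_def using jn n3 by auto

definition Al :: "nat \<Rightarrow> (nat \<Rightarrow> nat) \<Rightarrow> real" where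
  "Al l r = (\<Prod>i\<in>{1..n-2}. Fam (n-1) j l 0 i $ r i)"

lemma tm_split: "l \<in> {1..j} \<Longrightarrow> tm l z r = fact (absr n r - 1) * (1 / real k) ^ (absr n r) * Al l r * z $ r (n-1)"
proof -
  assume l: "l \<in> {1..j}"
  have "(\<Prod>i\<in>{1..n-1}. Fam (n-1) j l z i $ r i) = (\<Prod>i\<in>{1..n-2}. Fam (n-1) j l z i $ r i) * Fam (n-1) j l z (n-1) $ r (n-1)"
    by (rule prod_split)
  also have "(\<Prod>i\<in>{1..n-2}. Fam (n-1) j l z i $ r i) = Al l r"
    unfolding Al_def by (rule prod.cong[OF refl]) (metis Fam_low)
  finally show ?thesis unfolding tm_def Fam_top[OF l] by (simp add: mult.assoc)
qed

lemma Al_val: "l \<in> {1..j} \<Longrightarrow> Al l r = (if (\<forall>i\<in>{1..j}. 1 \<le> r i) \<and> r l = 1 then 1 / (\<Prod>i\<in>{1..n-2}. fact (r i)) else 0)"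
proof -
  assume l: "l \<in> {1..j}"
  show ?thesis
  proof (cases "(\<forall>i\<in>{1..j}. 1 \<le> r i) \<and> r l = 1")
    case True
    have "Al l r = (\<Prod>i\<in>{1..n-2}. 1 / fact (r i))"
      unfolding Al_def
    proof (rule prod.cong[OF refl])
      fix i assume i: "i \<in> {1..n-2}"
      show "Fam (n-1) j l 0 i $ r i = 1 / fact (r i)"
      proof -
        have ri: "i \<le> j \<Longrightarrow> 1 \<le> r i" using True i by auto
        consider "i = l" | "i \<noteq> l" "i \<le> j" | "\<not> i \<le> j" by auto
        then show ?thesis
        proof cases
          case 1 then show ?thesis using True by (simp add: Fam_def)
        next
          case 2
          then have "r i \<noteq> 0" using ri by auto
          then show ?thesis using 2 by (simp add: Fam_def)
        next
          case 3 then show ?thesis using i l by (simp add: Fam_def)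
        qed
      qed
    qed
    then show ?thesis using True by (simp add: prod_dividef)
  next
    case False
    have "Al l r = 0" unfolding Al_def
    proof (rule prod_zero)
      show "finite {1..n-2}" by simp
      show "\<exists>i\<in>{1..n-2}. Fam (n-1) j l 0 i $ r i = 0"
      proof (cases "r l = 1")
        case True
        with False obtain i where i: "i \<in> {1..j}" "r i = 0" by auto
        with True have il: "i \<noteq> l" by auto
        have "i \<in> {1..n-2}" using i jn by auto
        moreover have "Fam (n-1) j l 0 i $ r i = 0" using i il jn by (simp add: Fam_def)
        ultimately show ?thesis by blast
      next
        case False
        then show ?thesis using l jn by (intro bexI[of _ l]) (auto simp: Fam_def)
      qed
    qed
    then show ?thesis using False by simp
  qed
qed

lemma diffz: "(fps_X * fps_exp (1::real)) $ t - fps_exp 1 $ t = (real t - 1) / fact t"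
proof (cases t)
  case 0
  then show ?thesis by simp
next
  case (Suc u)
  have "(fact u :: real) > 0" by simp
  then show ?thesis using Suc by (simp add: field_simps del: fact_Suc) (simp add: algebra_simps)
qed

definition GG :: "(nat \<Rightarrow> nat) \<Rightarrow> real" where
  "GG r = (\<Sum>l=1..j. tm l (fps_X * fps_exp 1) r - tm l (fps_exp 1) r)"

lemma GG_eq: "GG r = (\<Sum>l=1..j. fact (absr n r - 1) * (1 / real k) ^ (absr n r) * Al l r * ((real (r (n-1)) - 1) / fact (r (n-1))))"
  unfolding GG_def
proof (rule sum.cong[OF refl])
  fix l assume l: "l \<in> {1..j}"
  show "tm l (fps_X * fps_exp 1) r - tm l (fps_exp 1) r = fact (absr n r - 1) * (1 / real k) ^ (absr n r) * Al l r * ((real (r (n-1)) - 1) / fact (r (n-1)))"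
    unfolding tm_split[OF l] diffz[symmetric] by (simp add: algebra_simps)
qed

lemma E_sub: "E_set n j \<subseteq> Uset"
  unfolding E_set_def Uset_def by auto

lemma GG_out: "r \<in> Uset - E_set n j \<Longrightarrow> GG r = 0"
proof -
  assume r: "r \<in> Uset - E_set n j"
  have "Al l r = 0" if l: "l \<in> {1..j}" for l
  proof -
    have "\<not> ((\<forall>i\<in>{1..j}. 1 \<le> r i) \<and> r l = 1)"
      using r l unfolding E_set_def Uset_def by auto
    then show ?thesis using Al_val[OF l] by simp
  qed
  then show ?thesis unfolding GG_eq by simp
qed

lemma GG_in: "r \<in> E_set n j \<Longrightarrow> Gamma_term n k j r = GG r"
proof -
  assume r: "r \<in> E_set n j"
  hence ge: "\<forall>i\<in>{1..j}. 1 \<le> r i" unfolding E_set_def by auto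
  define K where "K = fact (absr n r - 1) * (1 / real k) ^ (absr n r) * (1 / (\<Prod>i\<in>{1..n-2}. fact (r i))) * ((real (r (n-1)) - 1) / fact (r (n-1)))"
  have "GG r = (\<Sum>l=1..j. (if r l = 1 then 1 else 0) * K)"
    unfolding GG_eq K_def
  proof (rule sum.cong[OF refl])
    fix l assume l: "l \<in> {1..j}"
    show "fact (absr n r - 1) * (1 / real k) ^ (absr n r) * Al l r * ((real (r (n-1)) - 1) / fact (r (n-1))) =
      (if r l = 1 then 1 else 0) * (fact (absr n r - 1) * (1 / real k) ^ (absr n r) * (1 / (\<Prod>i\<in>{1..n-2}. fact (r i))) * ((real (r (n-1)) - 1) / fact (r (n-1))))"
      using Al_val[OF l] ge by simp
  qed
  also have "\<dots> = (\<Sum>l=1..j. if r l = 1 then 1 else 0) * K"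
    by (simp add: sum_distrib_right)
  also have "K = fact (absr n r - 1) / (\<Prod>i=1..n-1. fact (r i)) * (1 / real k) ^ (absr n r) * (real (r (n-1)) - 1)"
  proof -
    have p: "(\<Prod>i=1..n-1. fact (r i)) = (\<Prod>i\<in>{1..n-2}. fact (r i)) * (fact (r (n-1)) :: real)"
      by (rule prod_split)
    have "(\<Prod>i\<in>{1..n-2}. fact (r i) :: real) > 0" by (intro prod_pos) auto
    moreover have "(fact (r (n-1)) :: real) > 0" by simp
    ultimately show ?thesis unfolding K_def p by (simp add: field_simps)
  qed
  finally show ?thesis unfolding Gamma_term_def by (simp add: mult_ac)
qed

lemma Gamma_val: "Gamma n k j = real j * (Dsum (j-1) (\<lambda>s. 1 / (real (k - n + 1) + 1 + real s)^2) - Dsum (j-1) (\<lambda>s. 1 / (real (k - n + 1) + 1 + real s)))"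
proof -
  let ?P = "Dsum (j-1) (\<lambda>s. 1 / (real (k - n + 1) + 1 + real s)^2)"
  let ?Q = "Dsum (j-1) (\<lambda>s. 1 / (real (k - n + 1) + 1 + real s))"
  have "(GG has_sum (\<Sum>l=1..j. ?P - ?Q)) Uset"
    unfolding GG_def by (intro has_sum_sum_fin has_sum_diff' hasP hasQ) auto
  hence "(GG has_sum (real j * (?P - ?Q))) Uset" by simp
  hence "(Gamma_term n k j has_sum (real j * (?P - ?Q))) (E_set n j)"
    by (subst has_sum_cong_neutral[where g = GG and T = Uset]) (use GG_out GG_in E_sub in auto)
  thus ?thesis unfolding Gamma_def by (rule infsumI)
qed

end


lemma final_alg:
  fixes n k j :: nat
  assumes "3 \<le> n" "n \<le> k" "1 \<le> j" "j \<le> n - 2"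
    and G: "Gamma n k j = real j * (Dsum (j-1) (\<lambda>s. 1 / (real (k - n + 1) + 1 + real s)^2) - Dsum (j-1) (\<lambda>s. 1 / (real (k - n + 1) + 1 + real s)))"
  shows "T_val n k j = - (real k - real n)
           + (real k - real n + 1) * (\<Sum>i=2..j+1. 1 / (real k - real n + real i))"
proof -
  obtain e where e: "k = n + e" using assms(2) le_Suc_ex by blast
  obtain i where i: "j = Suc i" using assms(3) by (cases j) auto
  have d: "k - n + 1 = Suc e" using e by simp
  define A :: real where "A = fact i * fact (Suc e) / fact (Suc e + 1 + i)"
  have S1: "Dsum (j-1) (\<lambda>s. 1 / (real (k - n + 1) + 1 + real s)) = A"
    unfolding d A_def i by (simp only: diff_Suc_1 Dsum_S1)
  have S2: "Dsum (j-1) (\<lambda>s. 1 / (real (k - n + 1) + 1 + real s)^2) = A * Hs (Suc e) i"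
    unfolding d A_def i by (simp only: diff_Suc_1 Dsum_S2)
  have G2: "Gamma n k j = real j * A * (Hs (Suc e) i - 1)"
    unfolding G S1 S2 by (simp add: algebra_simps)
  have key: "real (j + 1) * real ((k - n + j + 1) choose (k - n)) * real j * A = real e + 1"
  proof -
    have c: "real ((e + i + 2) choose e) = fact (e + i + 2) / (fact e * fact (i + 2))"
      by (subst binomial_fact) auto
    have f1: "(fact (i + 2) :: real) = (real i + 2) * (real i + 1) * fact i"
      by (simp add: algebra_simps)
    have f2: "(fact (Suc e) :: real) = (real e + 1) * fact e" by simp
    have f3: "Suc e + 1 + i = e + i + 2" by simp
    have p1: "(fact i :: real) > 0" "(fact e :: real) > 0" "(fact (e + i + 2) :: real) > 0" by auto
    have ch: "(k - n + j + 1) choose (k - n) = (e + i + 2) choose e" using e i by simp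
    have alg: "\<And>F a b :: real. F > 0 \<Longrightarrow> a > 0 \<Longrightarrow> b > 0 \<Longrightarrow>
      (real i + 2) * (F / (a * ((real i + 2) * (real i + 1) * b))) * (real i + 1) * (b * ((real e + 1) * a) / F) = real e + 1"
    proof -
      fix F a b :: real assume "F > 0" "a > 0" "b > 0"
      moreover have "real i + 2 > 0" "real i + 1 > 0" by auto
      ultimately show "(real i + 2) * (F / (a * ((real i + 2) * (real i + 1) * b))) * (real i + 1) * (b * ((real e + 1) * a) / F) = real e + 1"
        by (simp add: divide_simps)
    qed
    have "real (j + 1) * real ((k - n + j + 1) choose (k - n)) * real j * A =
      (real i + 2) * (fact (e + i + 2) / (fact e * ((real i + 2) * (real i + 1) * fact i))) * (real i + 1) * (fact i * ((real e + 1) * fact e) / fact (e + i + 2))"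
    proof -
      have c': "real ((k-n+j+1) choose (k-n)) = fact (e+i+2) / (fact e * fact (i+2))" using c ch by simp
      have rj: "real (j+1) = real i + 2" "real j = real i + 1" using i by auto
      show ?thesis unfolding c' A_def f3 f2 f1 rj by simp
    qed
    also have "\<dots> = real e + 1" using p1 by (intro alg) auto
    finally show ?thesis .
  qed
  have H: "Hs (Suc e) i = (\<Sum>t=2..j+1. 1 / (real k - real n + real t))"
  proof -
    have "Hs (Suc e) i = (\<Sum>t\<le>i. 1 / (real e + real (t + 2)))"
      unfolding Hs_def by (intro sum.cong) (auto simp: algebra_simps)
    also have "\<dots> = (\<Sum>t=2..i+2. 1 / (real e + real t))"
    proof -
      have "(\<Sum>t=0+2..i+2. 1 / (real e + real t)) = (\<Sum>t=0..i. 1 / (real e + real (t + 2)))"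
        by (rule sum.shift_bounds_cl_nat_ivl)
      thus ?thesis by (metis atLeast0AtMost add_0)
    qed
    finally show ?thesis using e i by simp
  qed
  have "T_val n k j = (real (j + 1) * real ((k - n + j + 1) choose (k - n)) * real j * A) * (Hs (Suc e) i - 1) + 1"
    unfolding T_val_def G2 by (simp add: mult_ac)
  also have "\<dots> = (real e + 1) * (Hs (Suc e) i - 1) + 1" unfolding key ..
  finally show ?thesis unfolding H using e by (simp add: algebra_simps)
qed


theorem lemmaD1:
  fixes n k j :: nat
  assumes "3 \<le> n" "n \<le> k" "1 \<le> j" "j \<le> n - 2"
  shows "T_val n k j = - (real k - real n)
           + (real k - real n + 1) * (\<Sum>i=2..j+1. 1 / (real k - real n + real i))"
  by (rule final_alg[OF assms Gamma_val[OF assms]])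

end
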